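(* Let $K$ be a distance-bound space-filling curve. Then $K$-light-first order is energy-bound. That is, for every constant $\Delta \ge 1$ there is a constant $C$ (depending only on $\Delta$ and $K$) such that for every rooted tree $T$ with $n$ vertices in which every vertex has at most $\Delta$ children, if $T$ is stored in $K$-light-first order, then $$\sum_{v \in T}\ \sum_{c \text{ child of } v} \mathrm{dist}(p_v, p_c) \le C\, n,$$ i.e. the total energy of every vertex sending one message to each of its children is $O(n)$.
   Context: Processors sit on the cells of a two-dimensional grid (large enough to hold the tree). Sending a message from a processor at $(x_1,y_1)$ to one at $(x_2,y_2)$ costs energy equal to the Manhattan distance $|x_1-x_2|+|y_1-y_2|$. A space-filling curve $K$ is an enumeration of the grid cells; the processor at the $i$-th cell of the enumeration is called the $i$-th processor, and $\mathrm{dist}(i,j)$ denotes the energy of sending a message from the $i$-th to the $j$-th processor. $K$ is distance-bound if there is a constant $c$ such that for all natural numbers $i, j$, $\mathrm{dist}(i, i+j) \le c\sqrt{j}$. Light-first order: each vertex $v$ of a rooted tree is stored in one processor, at position $p_v$ along $K$ (the root at the first position). For a vertex $v$ let $s(v)$ denote the number of vertices in the subtree rooted at $v$. A vertex $v$ with children indexed $c_1,\dots,c_d$ so that $s(c_1)\le s(c_2)\le \dots \le s(c_d)$ has its neighborhood in light-first order if each $c_i$ is stored at position $p_v + 1 + \sum_{j=1}^{i-1} s(c_j)$. The tree is stored in $K$-light-first order if every vertex has its neighborhood in light-first order. A light-first order is energy-bound if, for trees of degree bounded by a constant, the total energy of each vertex sending a message to all its children is $O(n)$, $n$ the number of vertices.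 *)

theory Defs
  imports Complex_Main
begin

text \<open>A space-filling curve: an enumeration (injective map) of grid cells.
  Positions are indexed from 0, so the root sits at position 0.\<close>

definition space_filling_curve :: "(nat \<Rightarrow> int \<times> int) \<Rightarrow> bool" where
  "space_filling_curve K \<longleftrightarrow> inj K"

definition sfc_dist :: "(nat \<Rightarrow> int \<times> int) \<Rightarrow> nat \<Rightarrow> nat \<Rightarrow> int" where
  "sfc_dist K i j = \<bar>fst (K i) - fst (K j)\<bar> + \<bar>snd (K i) - snd (K j)\<bar>"

definition distance_bound :: "(nat \<Rightarrow> int \<times> int) \<Rightarrow> bool" where
  "distance_bound K \<longleftrightarrow> (\<exists>c::real. \<forall>i j. real_of_int (sfc_dist K i (i + j)) \<le> c * sqrt (real j))"

definition rooted_tree :: "nat set \<Rightarrow> nat \<Rightarrow> (nat \<Rightarrow> nat) \<Rightarrow> bool" where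
  "rooted_tree V r par \<longleftrightarrow> finite V \<and> r \<in> V \<and> par r = r \<and> (\<forall>v\<in>V. par v \<in> V)
     \<and> (\<forall>v\<in>V. \<exists>k. (par ^^ k) v = r)"

definition children :: "nat set \<Rightarrow> nat \<Rightarrow> (nat \<Rightarrow> nat) \<Rightarrow> nat \<Rightarrow> nat set" where
  "children V r par v = {c \<in> V. c \<noteq> r \<and> par c = v}"

definition subtree_size :: "nat set \<Rightarrow> (nat \<Rightarrow> nat) \<Rightarrow> nat \<Rightarrow> nat" where
  "subtree_size V par v = card {u \<in> V. \<exists>k. (par ^^ k) u = v}"

definition light_first_nbhd :: "nat set \<Rightarrow> nat \<Rightarrow> (nat \<Rightarrow> nat) \<Rightarrow> (nat \<Rightarrow> nat) \<Rightarrow> nat \<Rightarrow> bool" where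
  "light_first_nbhd V r par p v \<longleftrightarrow>
     (\<exists>cs. distinct cs \<and> set cs = children V r par v
        \<and> sorted (map (subtree_size V par) cs)
        \<and> (\<forall>i < length cs. p (cs ! i) = p v + 1 + (\<Sum>j<i. subtree_size V par (cs ! j))))"

definition light_first_order :: "nat set \<Rightarrow> nat \<Rightarrow> (nat \<Rightarrow> nat) \<Rightarrow> (nat \<Rightarrow> nat) \<Rightarrow> bool" where
  "light_first_order V r par p \<longleftrightarrow> p r = 0 \<and> (\<forall>v\<in>V. light_first_nbhd V r par p v)"

definition tree_energy :: "(nat \<Rightarrow> int \<times> int) \<Rightarrow> nat set \<Rightarrow> nat \<Rightarrow> (nat \<Rightarrow> nat) \<Rightarrow> (nat \<Rightarrow> nat) \<Rightarrow> int" where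
  "tree_energy K V r par p = (\<Sum>v\<in>V. \<Sum>c\<in>children V r par v. sfc_dist K (p v) (p c))"

end

theory Submission
  imports Defs
begin

definition desc :: "nat set \<Rightarrow> (nat \<Rightarrow> nat) \<Rightarrow> nat \<Rightarrow> nat set" where
  "desc V par v = {u \<in> V. \<exists>k. (par ^^ k) u = v}"

lemma ss_desc: "subtree_size V par v = card (desc V par v)"
  by (simp add: subtree_size_def desc_def)

lemma iter_fix: "par r = r \<Longrightarrow> (par ^^ n) r = r"
  by (induction n) auto

lemma iter_in: "rooted_tree V r par \<Longrightarrow> v \<in> V \<Longrightarrow> (par ^^ n) v \<in> V"
  by (induction n) (auto simp: rooted_tree_def)

lemma iter_mult: "(par ^^ m) v = v \<Longrightarrow> (par ^^ (m * k)) v = v"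
proof (induction k)
  case 0 then show ?case by simp
next
  case (Suc k)
  have "(par ^^ (m * Suc k)) v = (par ^^ m) ((par ^^ (m * k)) v)"
    by (simp add: funpow_add)
  then show ?case using Suc by simp
qed

lemma cycle_root:
  assumes T: "rooted_tree V r par" and v: "v \<in> V" and c: "(par ^^ m) v = v" and m: "m > 0"
  shows "v = r"
proof -
  obtain k where k: "(par ^^ k) v = r" using T v by (auto simp: rooted_tree_def)
  have pr: "par r = r" using T by (simp add: rooted_tree_def)
  have "m * k \<ge> k" using m by simp
  then have "(par ^^ (m * k)) v = (par ^^ (m * k - k)) ((par ^^ k) v)"
    by (metis funpow_add le_add_diff_inverse2 o_apply)
  also have "\<dots> = r" using k iter_fix[of par r, OF pr] by simp
  finally show ?thesis using iter_mult[OF c] by simp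
qed

lemma desc_decomp:
  assumes T: "rooted_tree V r par" and v: "v \<in> V"
  shows "desc V par v = insert v (\<Union>c\<in>children V r par v. desc V par c)"
proof
  show "insert v (\<Union>c\<in>children V r par v. desc V par c) \<subseteq> desc V par v"
  proof
    fix u assume "u \<in> insert v (\<Union>c\<in>children V r par v. desc V par c)"
    then show "u \<in> desc V par v"
    proof
      assume "u = v" then show ?thesis using v by (auto simp: desc_def intro: exI[of _ 0])
    next
      assume "u \<in> (\<Union>c\<in>children V r par v. desc V par c)"
      then obtain c k where "c \<in> children V r par v" "u \<in> V" "(par ^^ k) u = c"
        by (auto simp: desc_def)
      then have "(par ^^ Suc k) u = v" by (auto simp: children_def)
      then show ?thesis using \<open>u \<in> V\<close> unfolding desc_def by blast
    qed
  qed
next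
  show "desc V par v \<subseteq> insert v (\<Union>c\<in>children V r par v. desc V par c)"
  proof
    fix u assume u: "u \<in> desc V par v"
    show "u \<in> insert v (\<Union>c\<in>children V r par v. desc V par c)"
    proof (cases "u = v")
      case True then show ?thesis by simp
    next
      case False
      have uV: "u \<in> V" and ex: "\<exists>k. (par ^^ k) u = v" using u by (auto simp: desc_def)
      define k where "k = (LEAST k. (par ^^ k) u = v)"
      have kk: "(par ^^ k) u = v" unfolding k_def using ex by (rule LeastI_ex)
      have kmin: "\<And>j. j < k \<Longrightarrow> (par ^^ j) u \<noteq> v" unfolding k_def using not_less_Least by blast
      have "k \<noteq> 0" proof assume "k = 0" then show False using kk False by simp qed
      then obtain j where j: "k = Suc j" by (cases k) auto
      define c where "c = (par ^^ j) u"
      have pc: "par c = v" using kk j c_def by simp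
      have cV: "c \<in> V" using iter_in[OF T uV] c_def by simp
      have cv: "c \<noteq> v" using kmin[of j] j c_def by simp
      have cr: "c \<noteq> r"
      proof
        assume "c = r"
        then have "par c = c" using T by (simp add: rooted_tree_def)
        then show False using pc cv by simp
      qed
      have "c \<in> children V r par v" using cV cr pc by (simp add: children_def)
      moreover have "u \<in> desc V par c" using uV c_def by (auto simp: desc_def)
      ultimately show ?thesis by blast
    qed
  qed
qed

lemma not_in_desc_child:
  assumes T: "rooted_tree V r par" and v: "v \<in> V" and c: "c \<in> children V r par v"
  shows "v \<notin> desc V par c"
proof
  assume "v \<in> desc V par c"
  then obtain k where k: "(par ^^ k) v = c" by (auto simp: desc_def)
  have "par c = v" "c \<noteq> r" using c by (auto simp: children_def)
  then have "(par ^^ Suc k) v = v" using k by simp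
  then have "v = r" using cycle_root[OF T v] by blast
  then have "c = r" using k iter_fix T by (auto simp: rooted_tree_def)
  then show False using \<open>c \<noteq> r\<close> by simp
qed

lemma desc_disj_aux:
  assumes T: "rooted_tree V r par" and v: "v \<in> V"
    and c1: "c1 \<in> children V r par v" and c2: "c2 \<in> children V r par v" and ne: "c1 \<noteq> c2"
    and k1: "(par ^^ k1) u = c1" and k2: "(par ^^ k2) u = c2" and le: "k1 \<le> k2"
  shows False
proof -
  obtain m where m: "k2 = k1 + m" using le le_Suc_ex by blast
  have "(par ^^ k2) u = (par ^^ m) ((par ^^ k1) u)" using m by (metis funpow_add add.commute o_apply)
  then have "(par ^^ m) c1 = c2" using k1 k2 by simp
  then have m0: "m \<noteq> 0" using ne by (cases m) auto
  then obtain m' where m': "m = Suc m'" by (cases m) auto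
  have p1: "par c1 = v" and p2: "par c2 = v" "c2 \<noteq> r" using c1 c2 by (auto simp: children_def)
  have "(par ^^ m') v = c2" using \<open>(par ^^ m) c1 = c2\<close> m' p1 by (simp del: funpow.simps add: funpow_Suc_right)
  then have "(par ^^ Suc m') v = v" using p2 by simp
  then have "v = r" using cycle_root[OF T v] by blast
  then have "c2 = r" using \<open>(par ^^ m') v = c2\<close> iter_fix T by (auto simp: rooted_tree_def)
  then show False using p2 by simp
qed

lemma desc_disj:
  assumes T: "rooted_tree V r par" and v: "v \<in> V"
    and c1: "c1 \<in> children V r par v" and c2: "c2 \<in> children V r par v" and ne: "c1 \<noteq> c2"
  shows "desc V par c1 \<inter> desc V par c2 = {}"
proof (rule ccontr)
  assume "desc V par c1 \<inter> desc V par c2 \<noteq> {}"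
  then obtain u k1 k2 where k1: "(par ^^ k1) u = c1" and k2: "(par ^^ k2) u = c2"
    by (auto simp: desc_def)
  show False
  proof (cases "k1 \<le> k2")
    case True then show ?thesis using desc_disj_aux[OF T v c1 c2 ne k1 k2] by simp
  next
    case False then show ?thesis using desc_disj_aux[OF T v c2 c1 ne[symmetric] k2 k1] by simp
  qed
qed

lemma fin_children: "rooted_tree V r par \<Longrightarrow> finite (children V r par v)"
  by (auto simp: rooted_tree_def children_def)

lemma fin_desc: "rooted_tree V r par \<Longrightarrow> finite (desc V par v)"
  by (auto simp: rooted_tree_def desc_def)

lemma children_V: "c \<in> children V r par v \<Longrightarrow> c \<in> V"
  by (auto simp: children_def)

lemma ss_rec:
  assumes T: "rooted_tree V r par" and v: "v \<in> V"
  shows "subtree_size V par v = 1 + (\<Sum>c\<in>children V r par v. subtree_size V par c)"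
proof -
  have "card (desc V par v) = card (insert v (\<Union>c\<in>children V r par v. desc V par c))"
    using desc_decomp[OF T v] by simp
  also have "\<dots> = 1 + card (\<Union>c\<in>children V r par v. desc V par c)"
    using not_in_desc_child[OF T v] fin_children[OF T] fin_desc[OF T]
    by (subst card_insert_disjoint) auto
  also have "card (\<Union>c\<in>children V r par v. desc V par c) = (\<Sum>c\<in>children V r par v. card (desc V par c))"
    using fin_children[OF T] fin_desc[OF T] desc_disj[OF T v] by (intro card_UN_disjoint) auto
  finally show ?thesis by (simp add: ss_desc)
qed

lemma ss_pos: "rooted_tree V r par \<Longrightarrow> v \<in> V \<Longrightarrow> subtree_size V par v \<ge> 1"
  using ss_rec by fastforce

lemma ss_child_less:
  assumes T: "rooted_tree V r par" and v: "v \<in> V" and c: "c \<in> children V r par v"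
  shows "subtree_size V par c < subtree_size V par v"
proof -
  have "desc V par c \<subset> desc V par v"
    using desc_decomp[OF T v] not_in_desc_child[OF T v c] c by auto
  then show ?thesis unfolding ss_desc using fin_desc[OF T] by (simp add: psubset_card_mono)
qed

lemma sum_desc:
  assumes T: "rooted_tree V r par" and v: "v \<in> V"
  shows "(\<Sum>w\<in>desc V par v. f w) = f v + (\<Sum>c\<in>children V r par v. \<Sum>w\<in>desc V par c. f w)"
proof -
  have "(\<Sum>w\<in>desc V par v. f w) = (\<Sum>w\<in>insert v (\<Union>c\<in>children V r par v. desc V par c). f w)"
    using desc_decomp[OF T v] by simp
  also have "\<dots> = f v + (\<Sum>w\<in>(\<Union>c\<in>children V r par v. desc V par c). f w)"
    using not_in_desc_child[OF T v] fin_children[OF T] fin_desc[OF T]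
    by (subst sum.insert) auto
  also have "(\<Sum>w\<in>(\<Union>c\<in>children V r par v. desc V par c). f w) = (\<Sum>c\<in>children V r par v. \<Sum>w\<in>desc V par c. f w)"
    using fin_children[OF T] fin_desc[OF T] desc_disj[OF T v] by (intro sum.UNION_disjoint) auto
  finally show ?thesis .
qed

lemma desc_root: "rooted_tree V r par \<Longrightarrow> desc V par r = V"
  by (auto simp: rooted_tree_def desc_def)


definition hh :: "nat set \<Rightarrow> nat \<Rightarrow> (nat \<Rightarrow> nat) \<Rightarrow> nat \<Rightarrow> real" where
  "hh V r par v = (\<Sum>c\<in>children V r par v. sqrt (subtree_size V par c))
     - (if children V r par v = {} then 0 else sqrt (Max (subtree_size V par ` children V r par v)))"

lemma real_ineq:
  fixes x m X :: real
  assumes "m \<ge> 1" "x \<ge> 0" "m * X \<ge> x^2 - 1"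
  shows "2 * x \<le> 2 + m + X"
proof -
  have h1: "2*m + m^2 + x^2 - 1 \<le> m * (2 + m + X)" using assms by (simp add: algebra_simps power2_eq_square)
  have "0 \<le> (x - m)^2" by simp
  then have h2: "m * (2 * x) \<le> 2*m + m^2 + x^2 - 1" using assms(1) by (simp add: algebra_simps power2_eq_square)
  have "m * (2 * x) \<le> m * (2 + m + X)" using h1 h2 by linarith
  then show ?thesis using assms(1) by (simp add: mult_le_cancel_left)
qed

lemma hh_bound:
  assumes T: "rooted_tree V r par" and v: "v \<in> V"
  shows "(\<Sum>w\<in>desc V par v. hh V r par w) \<le> 2 * subtree_size V par v - 2 * sqrt (subtree_size V par v)"
  using v
proof (induction "subtree_size V par v" arbitrary: v rule: less_induct)
  case less
  let ?C = "children V r par v"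
  let ?s = "subtree_size V par"
  have IH: "\<And>c. c \<in> ?C \<Longrightarrow> (\<Sum>w\<in>desc V par c. hh V r par w) \<le> 2 * ?s c - 2 * sqrt (?s c)"
    using less ss_child_less[OF T less.prems] children_V by blast
  have sd: "(\<Sum>w\<in>desc V par v. hh V r par w) = hh V r par v + (\<Sum>c\<in>?C. \<Sum>w\<in>desc V par c. hh V r par w)"
    by (rule sum_desc[OF T less.prems])
  have rec: "?s v = 1 + (\<Sum>c\<in>?C. ?s c)" by (rule ss_rec[OF T less.prems])
  show ?case
  proof (cases "?C = {}")
    case True
    then show ?thesis using sd rec by (simp add: hh_def)
  next
    case False
    define M where "M = Max (?s ` ?C)"
    have fin: "finite ?C" by (rule fin_children[OF T])
    have Mge: "\<And>c. c \<in> ?C \<Longrightarrow> ?s c \<le> M" unfolding M_def using fin by simp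
    have "M \<in> ?s ` ?C" unfolding M_def using fin False by simp
    then have M1: "M \<ge> 1" using ss_pos[OF T] children_V by blast
    have hv: "hh V r par v = (\<Sum>c\<in>?C. sqrt (?s c)) - sqrt M" using False by (simp add: hh_def M_def)
    have "(\<Sum>w\<in>desc V par v. hh V r par w) \<le> hh V r par v + (\<Sum>c\<in>?C. 2 * real (?s c) - 2 * sqrt (?s c))"
      using sd IH by (simp add: sum_mono)
    also have "\<dots> = 2 * (real (?s v) - 1) - sqrt M - (\<Sum>c\<in>?C. sqrt (?s c))"
      using rec hv by (simp add: sum_subtractf sum_distrib_left[symmetric])
    also have "\<dots> \<le> 2 * ?s v - 2 * sqrt (?s v)"
    proof -
      have each: "\<And>c. c \<in> ?C \<Longrightarrow> real (?s c) \<le> sqrt M * sqrt (?s c)"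
      proof -
        fix c assume c: "c \<in> ?C"
        have "real (?s c) = sqrt (?s c) * sqrt (?s c)" by simp
        also have "\<dots> \<le> sqrt M * sqrt (?s c)" using Mge[OF c] by (intro mult_right_mono) auto
        finally show "real (?s c) \<le> sqrt M * sqrt (?s c)" .
      qed
      have "sqrt M * (\<Sum>c\<in>?C. sqrt (?s c)) \<ge> (\<Sum>c\<in>?C. real (?s c))"
        using each by (simp add: sum_distrib_left sum_mono)
      also have "(\<Sum>c\<in>?C. real (?s c)) = (sqrt (?s v))^2 - 1"
        proof -
          have "real (?s v) = 1 + (\<Sum>c\<in>?C. real (?s c))" using rec by simp
          then show ?thesis by simp
        qed
      finally have "2 * sqrt (?s v) \<le> 2 + sqrt M + (\<Sum>c\<in>?C. sqrt (?s c))"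
        using M1 by (intro real_ineq) auto
      then show ?thesis by simp
    qed
    finally show ?thesis .
  qed
qed


lemma sqrt_sum_le:
  fixes i :: nat
  assumes "\<And>j. a j \<ge> (0::real)"
  shows "sqrt (1 + (\<Sum>j<i. a j)) \<le> 1 + (\<Sum>j<i. sqrt (a j))"
proof (induction i)
  case 0 then show ?case by simp
next
  case (Suc i)
  have "sqrt (1 + (\<Sum>j<Suc i. a j)) = sqrt ((1 + (\<Sum>j<i. a j)) + a i)" by (simp add: add.assoc)
  also have "\<dots> \<le> sqrt (1 + (\<Sum>j<i. a j)) + sqrt (a i)"
    proof (rule sqrt_add_le_add_sqrt)
    have "0 \<le> (\<Sum>j<i. a j)" using assms by (simp add: sum_nonneg)
    then show "0 \<le> 1 + (\<Sum>j<i. a j)" by simp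
  qed (rule assms)
  also have "\<dots> \<le> 1 + (\<Sum>j<Suc i. sqrt (a j))" using Suc by simp
  finally show ?case .
qed

lemma sum_set_nth: "distinct cs \<Longrightarrow> sum g (set cs) = (\<Sum>i<length cs. g (cs!i))"
  by (simp add: sum_list_distinct_conv_sum_set[symmetric] sum_list_sum_nth atLeast0LessThan)

lemma energy_local:
  assumes T: "rooted_tree V r par" and v: "v \<in> V" and lf: "light_first_nbhd V r par p v"
    and c0: "c \<ge> 0"
    and db: "\<forall>i j. real_of_int (sfc_dist K i (i + j)) \<le> c * sqrt (real j)"
  shows "real_of_int (\<Sum>ch\<in>children V r par v. sfc_dist K (p v) (p ch))
           \<le> real (card (children V r par v)) * (c * (1 + hh V r par v))"
proof -
  let ?C = "children V r par v"
  let ?s = "subtree_size V par"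
  obtain cs where dc: "distinct cs" and sc: "set cs = ?C" and so: "sorted (map ?s cs)"
    and pos: "\<And>i. i < length cs \<Longrightarrow> p (cs ! i) = p v + 1 + (\<Sum>j<i. ?s (cs ! j))"
    using lf unfolding light_first_nbhd_def by blast
  define d where "d = length cs"
  have cardC: "card ?C = d" using dc sc d_def distinct_card by fastforce
  show ?thesis
  proof (cases "cs = []")
    case True
    then have "?C = {}" using sc by simp
    then show ?thesis by simp
  next
    case False
    then have d1: "d \<ge> 1" using d_def by (cases cs) auto
    have fin: "finite ?C" by (rule fin_children[OF T])
    have mono: "\<And>j. j < d \<Longrightarrow> ?s (cs ! j) \<le> ?s (cs ! (d - 1))"
    proof -
      fix j assume j: "j < d"
      have "(map ?s cs) ! j \<le> (map ?s cs) ! (d - 1)"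
        using sorted_nth_mono[OF so, of j "d - 1"] j d_def by simp
      then show "?s (cs ! j) \<le> ?s (cs ! (d - 1))" using j d_def by simp
    qed
    have Meq: "Max (?s ` ?C) = ?s (cs ! (d - 1))"
    proof (rule Max_eqI)
      show "finite (?s ` ?C)" using fin by simp
      show "y \<le> ?s (cs ! (d - 1))" if yin: "y \<in> ?s ` ?C" for y
      proof -
        obtain x where x: "x \<in> set cs" "y = ?s x" using yin sc by auto
        then obtain j where "j < d" "x = cs ! j" by (auto simp: in_set_conv_nth d_def)
        then show ?thesis using mono x by simp
      qed
      show "?s (cs ! (d - 1)) \<in> ?s ` ?C" 
      proof -
        have "d - 1 < length cs" using d1 d_def by simp
        then have "cs ! (d - 1) \<in> set cs" by (rule nth_mem)
        then show ?thesis using sc by blast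
      qed
    qed
    have Cne: "?C \<noteq> {}" using sc False by auto
    have "(\<Sum>ch\<in>?C. sqrt (?s ch)) = (\<Sum>i<d. sqrt (?s (cs!i)))"
      unfolding sc[symmetric] d_def by (rule sum_set_nth[OF dc])
    also have "\<dots> = (\<Sum>i<d-1. sqrt (?s (cs!i))) + sqrt (?s (cs!(d-1)))"
    proof -
      obtain d' where d': "d = Suc d'" using d1 by (cases d) auto
      show ?thesis unfolding d' by simp
    qed
    finally have hv: "hh V r par v = (\<Sum>i<d-1. sqrt (?s (cs!i)))"
      using Cne Meq by (simp add: hh_def)
    have termb: "real_of_int (sfc_dist K (p v) (p (cs!i))) \<le> c * (1 + hh V r par v)" if i: "i < d" for i
    proof -
      have "real_of_int (sfc_dist K (p v) (p (cs!i))) = real_of_int (sfc_dist K (p v) (p v + (1 + (\<Sum>j<i. ?s (cs ! j)))))"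
        using pos[of i] i d_def by simp
      also have "\<dots> \<le> c * sqrt (real (1 + (\<Sum>j<i. ?s (cs ! j))))" using db by blast
      also have "sqrt (real (1 + (\<Sum>j<i. ?s (cs ! j)))) = sqrt (1 + (\<Sum>j<i. real (?s (cs ! j))))" by simp
      also have "\<dots> \<le> 1 + (\<Sum>j<i. sqrt (?s (cs ! j)))" by (rule sqrt_sum_le) simp
      also have "(\<Sum>j<i. sqrt (?s (cs ! j))) \<le> (\<Sum>j<d-1. sqrt (?s (cs ! j)))"
        using i by (intro sum_mono2) auto
      finally have "real_of_int (sfc_dist K (p v) (p (cs!i))) \<le> c * (1 + (\<Sum>j<d-1. sqrt (?s (cs ! j))))"
        using c0 by (simp add: mult_left_mono)
      then show ?thesis using hv by simp
    qed
    have "real_of_int (\<Sum>ch\<in>?C. sfc_dist K (p v) (p ch)) = (\<Sum>i<d. real_of_int (sfc_dist K (p v) (p (cs!i))))"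
      unfolding of_int_sum sc[symmetric] d_def by (rule sum_set_nth[OF dc])
    also have "\<dots> \<le> (\<Sum>i<d. c * (1 + hh V r par v))" using termb by (intro sum_mono) auto
    also have "\<dots> = real (card ?C) * (c * (1 + hh V r par v))" using cardC by simp
    finally show ?thesis .
  qed
qed

lemma hh_nonneg:
  assumes T: "rooted_tree V r par"
  shows "hh V r par v \<ge> 0"
proof (cases "children V r par v = {}")
  case True then show ?thesis by (simp add: hh_def)
next
  case False
  let ?C = "children V r par v"
  let ?s = "subtree_size V par"
  have fin: "finite ?C" by (rule fin_children[OF T])
  obtain m where m: "m \<in> ?C" "Max (?s ` ?C) = ?s m" using fin False
    by (metis (no_types, lifting) Max_in finite_imageI image_iff image_is_empty)
  have "sqrt (?s m) \<le> (\<Sum>c\<in>?C. sqrt (?s c))" using fin m by (intro member_le_sum) auto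
  then show ?thesis using False m by (simp add: hh_def)
qed

theorem mainTheorem1:
  fixes K :: "nat \<Rightarrow> int \<times> int"
  assumes "space_filling_curve K" and "distance_bound K"
  shows "\<forall>\<Delta>::nat. \<Delta> \<ge> 1 \<longrightarrow> (\<exists>C::real. \<forall>V r par p.
           rooted_tree V r par \<and> (\<forall>v\<in>V. card (children V r par v) \<le> \<Delta>)
           \<and> light_first_order V r par p
           \<longrightarrow> real_of_int (tree_energy K V r par p) \<le> C * real (card V))"
proof (intro allI impI)
  fix \<Delta> :: nat assume "\<Delta> \<ge> 1"
  obtain c where db: "\<forall>i j. real_of_int (sfc_dist K i (i + j)) \<le> c * sqrt (real j)"
    using assms(2) unfolding distance_bound_def by blast
  have "0 \<le> real_of_int (sfc_dist K 0 (0 + 1))" by (simp add: sfc_dist_def)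
  also have "\<dots> \<le> c" using db[rule_format, of 0 1] by simp
  finally have c0: "c \<ge> 0" .
  show "\<exists>C::real. \<forall>V r par p.
           rooted_tree V r par \<and> (\<forall>v\<in>V. card (children V r par v) \<le> \<Delta>)
           \<and> light_first_order V r par p
           \<longrightarrow> real_of_int (tree_energy K V r par p) \<le> C * real (card V)"
  proof (intro exI[of _ "3 * real \<Delta> * c"] allI impI)
    fix V r par p
    assume H: "rooted_tree V r par \<and> (\<forall>v\<in>V. card (children V r par v) \<le> \<Delta>) \<and> light_first_order V r par p"
    then have T: "rooted_tree V r par" and deg: "\<And>v. v \<in> V \<Longrightarrow> card (children V r par v) \<le> \<Delta>"
      and lf: "\<And>v. v \<in> V \<Longrightarrow> light_first_nbhd V r par p v"
      by (auto simp: light_first_order_def)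
    have rV: "r \<in> V" using T by (simp add: rooted_tree_def)
    have each: "real_of_int (\<Sum>ch\<in>children V r par v. sfc_dist K (p v) (p ch))
        \<le> real \<Delta> * c * (1 + hh V r par v)" if v: "v \<in> V" for v
    proof -
      have "real_of_int (\<Sum>ch\<in>children V r par v. sfc_dist K (p v) (p ch))
           \<le> real (card (children V r par v)) * (c * (1 + hh V r par v))"
        by (rule energy_local[OF T v lf[OF v] c0 db])
      also have "\<dots> \<le> real \<Delta> * (c * (1 + hh V r par v))"
        using deg[OF v] c0 hh_nonneg[OF T, of v] by (intro mult_right_mono) auto
      finally show ?thesis by simp
    qed
    have "real_of_int (tree_energy K V r par p) = (\<Sum>v\<in>V. real_of_int (\<Sum>ch\<in>children V r par v. sfc_dist K (p v) (p ch)))"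
      by (simp add: tree_energy_def)
    also have "\<dots> \<le> (\<Sum>v\<in>V. real \<Delta> * c * (1 + hh V r par v))" using each by (rule sum_mono)
    also have "\<dots> = real \<Delta> * c * (real (card V) + (\<Sum>v\<in>V. hh V r par v))"
      by (simp add: sum_distrib_left[symmetric] sum.distrib)
    also have "(\<Sum>v\<in>V. hh V r par v) \<le> 2 * real (card V)"
    proof -
      have "(\<Sum>v\<in>V. hh V r par v) = (\<Sum>w\<in>desc V par r. hh V r par w)" using desc_root[OF T] by simp
      also have "\<dots> \<le> 2 * subtree_size V par r - 2 * sqrt (subtree_size V par r)" by (rule hh_bound[OF T rV])
      also have "\<dots> \<le> 2 * subtree_size V par r" by simp
      also have "subtree_size V par r = card V" using desc_root[OF T] ss_desc by metis
      finally show ?thesis by simp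
    qed
    then have "real \<Delta> * c * (real (card V) + (\<Sum>v\<in>V. hh V r par v)) \<le> real \<Delta> * c * (real (card V) + 2 * real (card V))"
      using c0 by (intro mult_left_mono) auto
    also have "\<dots> = 3 * real \<Delta> * c * real (card V)" by simp
    finally show "real_of_int (tree_energy K V r par p) \<le> 3 * real \<Delta> * c * real (card V)" .
  qed
qed

end
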